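(* Let $A=\{a_1,\dots,a_k\}$ with $k\ge2$, $u_1,u_2:A\to\mathbb{R}$, and assume there is a unique efficient option $a^\star$, i.e. $u_1(a^\star)+u_2(a^\star)>u_1(a)+u_2(a)$ for all $a\ne a^\star$. Then there exists $\bar\varepsilon>0$ such that for every $\varepsilon\in(0,\bar\varepsilon)$: an $\varepsilon$-robust subgame-perfect Nash equilibrium of the two-player Price \& Choose game exists, and the outcome of every $\varepsilon$-robust subgame-perfect Nash equilibrium is $a^\star$.
   Context: Quasi-linear Price \& Choose game: $P=\{p\in\mathbb{R}^k:\sum_j p_j=0\}$; player 1 chooses $p\in P$; then player 2, having observed $p$, chooses $a_j\in A$ and pays $p_j$ to player 1; payoffs $g_1(p,a_j)=u_1(a_j)+p_j$, $g_2(p,a_j)=u_2(a_j)-p_j$. Strategy profiles are $\sigma=(\sigma_1,\sigma_2)$ with $\sigma_1\in P$, $\sigma_2:P\to A$. For $\varepsilon>0$ and $p\in P$, let $\beta_2^\varepsilon(p)=\{a\in A: g_2(p,a)+\varepsilon\ge g_2(p,a')\text{ for all }a'\in A\}$ (the $\varepsilon$-maximizers of player 2). The profile $\sigma$ is an $\varepsilon$-robust subgame-perfect Nash equilibrium if (1) for every $p\in P$, $\sigma_2(p)\in\arg\min\{g_1(p,a):a\in\beta_2^\varepsilon(p)\}$, and (2) $g_1(\sigma_1,\sigma_2(\sigma_1))+\varepsilon\ge g_1(p',\sigma_2(p'))$ for all $p'\in P$. Its outcome is $\sigma_2(\sigma_1)$. *)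

theory Defs
  imports Complex_Main "HOL-Library.Cardinality"
begin

text \<open>Options form a finite type 'a (the set A); prices are vectors indexed by A summing to 0.\<close>

definition price_set :: "('a::finite \<Rightarrow> real) set" where
  "price_set = {p. (\<Sum>j\<in>UNIV. p j) = 0}"

definition g1 :: "('a \<Rightarrow> real) \<Rightarrow> ('a \<Rightarrow> real) \<Rightarrow> 'a \<Rightarrow> real" where
  "g1 u1 p a = u1 a + p a"

definition g2 :: "('a \<Rightarrow> real) \<Rightarrow> ('a \<Rightarrow> real) \<Rightarrow> 'a \<Rightarrow> real" where
  "g2 u2 p a = u2 a - p a"

definition beta2 :: "('a \<Rightarrow> real) \<Rightarrow> real \<Rightarrow> ('a \<Rightarrow> real) \<Rightarrow> 'a set" where
  "beta2 u2 eps p = {a. \<forall>a'. g2 u2 p a + eps \<ge> g2 u2 p a'}"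

definition robust_spne ::
  "('a::finite \<Rightarrow> real) \<Rightarrow> ('a \<Rightarrow> real) \<Rightarrow> real \<Rightarrow> ('a \<Rightarrow> real) \<Rightarrow> (('a \<Rightarrow> real) \<Rightarrow> 'a) \<Rightarrow> bool" where
  "robust_spne u1 u2 eps \<sigma>1 \<sigma>2 \<longleftrightarrow>
     \<sigma>1 \<in> price_set \<and>
     (\<forall>p\<in>price_set. is_arg_min (g1 u1 p) (\<lambda>a. a \<in> beta2 u2 eps p) (\<sigma>2 p)) \<and>
     (\<forall>p'\<in>price_set. g1 u1 \<sigma>1 (\<sigma>2 \<sigma>1) + eps \<ge> g1 u1 p' (\<sigma>2 p'))"

end

theory Submission
  imports Defs
begin

lemma max_g2:
  fixes u2 p :: "'a::finite \<Rightarrow> real"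
  assumes "p \<in> price_set"
  shows "\<exists>b. (\<forall>a. g2 u2 p a \<le> g2 u2 p b) \<and> g2 u2 p b \<ge> sum u2 UNIV / real CARD('a)"
proof -
  let ?S = "range (g2 u2 p)"
  have fin: "finite ?S" by simp
  obtain b where b: "g2 u2 p b = Max ?S" using Max_in[OF fin] by fastforce
  have le: "\<forall>a. g2 u2 p a \<le> g2 u2 p b" using b Max_ge[OF fin] by auto
  have "sum (g2 u2 p) UNIV = sum u2 UNIV - sum p UNIV"
    by (simp add: g2_def sum_subtractf)
  also have "\<dots> = sum u2 UNIV" using assms by (simp add: price_set_def)
  finally have s: "sum (g2 u2 p) UNIV = sum u2 UNIV" .
  have "sum (g2 u2 p) UNIV \<le> of_nat (card (UNIV::'a set)) * g2 u2 p b"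
    by (rule sum_bounded_above) (use le in auto)
  then have "sum u2 UNIV \<le> real CARD('a) * g2 u2 p b" using s by simp
  moreover have "real CARD('a) > 0" by simp
  ultimately have "g2 u2 p b \<ge> sum u2 UNIV / real CARD('a)"
    by (simp add: divide_le_eq mult.commute)
  with le show ?thesis by blast
qed

lemma argmin_bound:
  fixes u1 u2 p :: "'a::finite \<Rightarrow> real"
  assumes "p \<in> price_set" "eps > 0"
    and W: "\<forall>a. u1 a + u2 a \<le> u1 astar + u2 astar"
    and am: "is_arg_min (g1 u1 p) (\<lambda>a. a \<in> beta2 u2 eps p) x"
  shows "g1 u1 p x \<le> u1 astar + u2 astar - sum u2 UNIV / real CARD('a)"
proof -
  obtain b where b: "\<forall>a. g2 u2 p a \<le> g2 u2 p b" "g2 u2 p b \<ge> sum u2 UNIV / real CARD('a)"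
    using max_g2[OF assms(1)] by blast
  have "b \<in> beta2 u2 eps p" unfolding beta2_def
  proof (intro CollectI allI)
    fix a' show "g2 u2 p b + eps \<ge> g2 u2 p a'" using b(1)[rule_format, of a'] assms(2) by linarith
  qed
  then have "g1 u1 p x \<le> g1 u1 p b" using am unfolding is_arg_min_def by force
  also have "\<dots> = u1 b + u2 b - g2 u2 p b" by (simp add: g1_def g2_def)
  also have "\<dots> \<le> u1 astar + u2 astar - sum u2 UNIV / real CARD('a)"
    using W[rule_format, of b] b(2) by linarith
  finally show ?thesis .
qed

lemma x_bound:
  fixes u1 u2 p :: "'a::finite \<Rightarrow> real"
  assumes "p \<in> price_set"
    and am: "is_arg_min (g1 u1 p) (\<lambda>a. a \<in> beta2 u2 eps p) x"
  shows "g1 u1 p x \<le> u1 x + u2 x - sum u2 UNIV / real CARD('a) + eps"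
proof -
  obtain b where b: "\<forall>a. g2 u2 p a \<le> g2 u2 p b" "g2 u2 p b \<ge> sum u2 UNIV / real CARD('a)"
    using max_g2[OF assms(1)] by blast
  have "x \<in> beta2 u2 eps p" using am unfolding is_arg_min_def by simp
  then have "g2 u2 p x + eps \<ge> g2 u2 p b" unfolding beta2_def by blast
  then show ?thesis using b(2) by (simp add: g1_def g2_def)
qed

theorem proposition4:
  fixes u1 u2 :: "'a::finite \<Rightarrow> real" and astar :: 'a
  assumes "CARD('a) \<ge> 2"
    and "\<forall>a. a \<noteq> astar \<longrightarrow> u1 astar + u2 astar > u1 a + u2 a"
  shows "\<exists>eb>0. \<forall>eps. 0 < eps \<and> eps < eb \<longrightarrow>
           (\<exists>\<sigma>1 \<sigma>2. robust_spne u1 u2 eps \<sigma>1 \<sigma>2) \<and>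
           (\<forall>\<sigma>1 \<sigma>2. robust_spne u1 u2 eps \<sigma>1 \<sigma>2 \<longrightarrow> \<sigma>2 \<sigma>1 = astar)"
proof -
  define W where "W a = u1 a + u2 a" for a
  define D where "D = Min (insert 1 ((\<lambda>a. W astar - W a) ` {a. a \<noteq> astar}))"
  have Dpos: "D > 0" unfolding D_def using assms(2) by (auto simp: W_def)
  have Dle: "\<And>a. a \<noteq> astar \<Longrightarrow> D \<le> W astar - W a" unfolding D_def by auto
  have Wle: "\<forall>a. u1 a + u2 a \<le> u1 astar + u2 astar" using assms(2) by (metis order.refl less_imp_le)
  define k where "k = real CARD('a)"
  define C where "C = sum u2 UNIV"
  have k2: "k \<ge> 2" using assms(1) unfolding k_def by simp
  show ?thesis
  proof (intro exI[of _ "D/3"] conjI allI impI)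
    show "D/3 > 0" using Dpos by simp
    fix eps :: real assume eps: "0 < eps \<and> eps < D/3"
    define e' where "e' = eps * k / (k - 1)"
    define d where "d = (C - e') / k"
    define ps where "ps b = u2 b - d - (if b = astar then e' else 0)" for b
    have e'gt: "e' > eps" unfolding e'_def using eps k2 by (simp add: field_simps)
    have "sum ps UNIV = C - k * d - e'"
      unfolding ps_def C_def k_def by (simp add: sum_subtractf sum.If_cases)
    also have "\<dots> = 0" unfolding d_def using k2 by simp
    finally have ps_in: "ps \<in> price_set" by (simp add: price_set_def)
    have g2ps: "g2 u2 ps b = d + (if b = astar then e' else 0)" for b
      by (simp add: g2_def ps_def)
    have beta: "beta2 u2 eps ps = {astar}"
    proof -
      have "b \<in> beta2 u2 eps ps \<longleftrightarrow> b = astar" for b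
      proof
        assume "b \<in> beta2 u2 eps ps"
        then have "g2 u2 ps b + eps \<ge> g2 u2 ps astar" unfolding beta2_def by blast
        then show "b = astar" using e'gt by (auto simp: g2ps split: if_splits)
      next
        assume "b = astar" then show "b \<in> beta2 u2 eps ps"
          using e'gt eps unfolding beta2_def by (auto simp: g2ps)
      qed
      then show ?thesis by auto
    qed
    have Vps: "g1 u1 ps astar = W astar - C / k - eps"
    proof -
      have "g1 u1 ps astar = W astar - d - e'" by (simp add: g1_def ps_def W_def)
      also have "\<dots> = W astar - C / k - eps"
      proof -
        have k0: "k \<noteq> 0" "k - 1 \<noteq> 0" using k2 by auto
        have "d + e' = C / k + e' * (k - 1) / k" unfolding d_def using k0 by (simp add: field_simps)
        also have "e' * (k - 1) = eps * k" unfolding e'_def using k0 by simp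
        finally have "d + e' = C / k + eps" using k0 by simp
        then show ?thesis by simp
      qed
      finally show ?thesis .
    qed
    have bne: "\<And>p. beta2 u2 eps p \<noteq> {}"
    proof -
      fix p :: "'a \<Rightarrow> real"
      obtain b where "b = Max (range (g2 u2 p))" by blast
      have fin: "finite (range (g2 u2 p))" by simp
      obtain c where c: "g2 u2 p c = Max (range (g2 u2 p))" using Max_in[OF fin] by fastforce
      have "c \<in> beta2 u2 eps p" unfolding beta2_def
      proof (intro CollectI allI)
        fix a' have "g2 u2 p a' \<le> g2 u2 p c" using c Max_ge[OF fin] by simp
        then show "g2 u2 p c + eps \<ge> g2 u2 p a'" using eps by linarith
      qed
      then show "beta2 u2 eps p \<noteq> {}" by blast
    qed
    have ex_am: "\<And>p. \<exists>x. is_arg_min (g1 u1 p) (\<lambda>a. a \<in> beta2 u2 eps p) x"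
      by (rule ex_is_arg_min_if_finite) (simp_all add: bne)
    have s2ps: "is_arg_min (g1 u1 ps) (\<lambda>a. a \<in> beta2 u2 eps ps) x \<Longrightarrow> x = astar" for x
      unfolding is_arg_min_def using beta by auto
    show "\<exists>\<sigma>1 \<sigma>2. robust_spne u1 u2 eps \<sigma>1 \<sigma>2"
    proof (intro exI)
      define s2 where "s2 p = (SOME x. is_arg_min (g1 u1 p) (\<lambda>a. a \<in> beta2 u2 eps p) x)" for p
      have s2: "is_arg_min (g1 u1 p) (\<lambda>a. a \<in> beta2 u2 eps p) (s2 p)" for p
        unfolding s2_def using ex_am someI_ex by metis
      have "s2 ps = astar" using s2ps s2 by blast
      moreover have "g1 u1 p' (s2 p') \<le> W astar - C / k" if "p' \<in> price_set" for p'
        using argmin_bound[OF that _ Wle s2] eps unfolding W_def C_def k_def by simp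
      ultimately show "robust_spne u1 u2 eps ps s2"
        unfolding robust_spne_def using ps_in s2 Vps by fastforce
    qed
    show "s2 s1 = astar" if r: "robust_spne u1 u2 eps s1 s2" for s1 s2
    proof -
      have s1: "s1 \<in> price_set" using r unfolding robust_spne_def by blast
      have am: "\<And>p. p \<in> price_set \<Longrightarrow> is_arg_min (g1 u1 p) (\<lambda>a. a \<in> beta2 u2 eps p) (s2 p)"
        using r unfolding robust_spne_def by blast
      have opt: "g1 u1 s1 (s2 s1) + eps \<ge> g1 u1 ps (s2 ps)"
        using r ps_in unfolding robust_spne_def by blast
      have "s2 ps = astar" using s2ps am[OF ps_in] by blast
      with opt Vps have lo: "g1 u1 s1 (s2 s1) \<ge> W astar - C / k - 2 * eps" by simp
      have hi: "g1 u1 s1 (s2 s1) \<le> W (s2 s1) - C / k + eps"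
        using x_bound[OF s1 am[OF s1]] unfolding W_def C_def k_def by simp
      show "s2 s1 = astar"
      proof (rule ccontr)
        assume "s2 s1 \<noteq> astar"
        then have "D \<le> W astar - W (s2 s1)" by (rule Dle)
        then show False using lo hi eps by simp
      qed
    qed
  qed
qed

end
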